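(* Let $S$ be a Foulis semigroup and $s\in S$ a self-adjoint idempotent ($s\cdot s=s=s^\dagger$). Then $\mathrm{End}(s)=\{t\in S: s\cdot t=t=t\cdot s\}$, with multiplication of $S$, unit $s$, involution $\dagger$, and $[t]_s=s\cdot[t]\cdot s$, is a Foulis semigroup; it coincides with the endomorphism Foulis semigroup of the object $s$ in the dagger kernel category $\mathrm{Kar}_\dagger(S)$. For $s=1$ one recovers $\mathrm{End}(1)=S$.
   Context: A Foulis semigroup is a monoid $(S,\cdot,1)$ with maps $(-)^\dagger:S\to S$ and $[-]:S\to S$ such that: (1) $1^\dagger=1$, $(s\cdot t)^\dagger=t^\dagger\cdot s^\dagger$, $s^{\dagger\dagger}=s$; (2) $[s]\cdot[s]=[s]=[s]^\dagger$; (3) $0:=[1]$ satisfies $0\cdot s=0=s\cdot 0$ for all $s$; (4) for all $s,x$: $s\cdot x=0$ iff $x=[s]\cdot y$ for some $y\in S$. $\mathrm{Kar}_\dagger(S)$ is the category whose objects are self-adjoint idempotents of $S$, whose morphisms $f:s\to t$ are elements $f\in S$ with $f\cdot s=f=t\cdot f$, with composition the multiplication, identity on $s$ equal to $s$, dagger the involution; it is a dagger kernel category in which the kernel of $f:s\to t$ is $s\cdot[f]$. In a dagger kernel category the endomorphisms of an object form a Foulis semigroup with $[u]=\ker(u)\circ\ker(u)^\dagger$. *)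

theory Defs
  imports Main
begin

text \<open>A Foulis semigroup on a carrier set C, with multiplication m, unit e,
  involution d (dagger) and bracket b.  The zero is b e.\<close>
definition foulis :: "'a set \<Rightarrow> ('a \<Rightarrow> 'a \<Rightarrow> 'a) \<Rightarrow> 'a \<Rightarrow> ('a \<Rightarrow> 'a) \<Rightarrow> ('a \<Rightarrow> 'a) \<Rightarrow> bool" where
  "foulis C m e d b \<longleftrightarrow>
     e \<in> C \<and> (\<forall>x\<in>C. \<forall>y\<in>C. m x y \<in> C) \<and> (\<forall>x\<in>C. d x \<in> C \<and> b x \<in> C) \<and>
     (\<forall>x\<in>C. \<forall>y\<in>C. \<forall>z\<in>C. m (m x y) z = m x (m y z)) \<and>
     (\<forall>x\<in>C. m e x = x \<and> m x e = x) \<and>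
     d e = e \<and> (\<forall>x\<in>C. \<forall>y\<in>C. d (m x y) = m (d y) (d x)) \<and> (\<forall>x\<in>C. d (d x) = x) \<and>
     (\<forall>x\<in>C. m (b x) (b x) = b x \<and> b x = d (b x)) \<and>
     (\<forall>x\<in>C. m (b e) x = b e \<and> m x (b e) = b e) \<and>
     (\<forall>x\<in>C. \<forall>y\<in>C. m x y = b e \<longleftrightarrow> (\<exists>z\<in>C. y = m (b x) z))"

definition End_set :: "('a \<Rightarrow> 'a \<Rightarrow> 'a) \<Rightarrow> 'a \<Rightarrow> 'a set" where
  "End_set m s = {t. m s t = t \<and> m t s = t}"

definition kar_obj :: "('a \<Rightarrow> 'a \<Rightarrow> 'a) \<Rightarrow> ('a \<Rightarrow> 'a) \<Rightarrow> 'a \<Rightarrow> bool" where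
  "kar_obj m d s \<longleftrightarrow> m s s = s \<and> d s = s"

definition kar_hom :: "('a \<Rightarrow> 'a \<Rightarrow> 'a) \<Rightarrow> 'a \<Rightarrow> 'a \<Rightarrow> 'a \<Rightarrow> bool" where
  "kar_hom m s t f \<longleftrightarrow> m f s = f \<and> m t f = f"

text \<open>k : p \<rightarrow> s is a dagger kernel of u : s \<rightarrow> t in Kar_dagger(S).
  Zero morphisms in Kar_dagger(S) are the element z = 0 of S.\<close>
definition kar_dkernel :: "('a \<Rightarrow> 'a \<Rightarrow> 'a) \<Rightarrow> ('a \<Rightarrow> 'a) \<Rightarrow> 'a \<Rightarrow>
    'a \<Rightarrow> 'a \<Rightarrow> 'a \<Rightarrow> 'a \<Rightarrow> 'a \<Rightarrow> bool" where
  "kar_dkernel m d z s t u p k \<longleftrightarrow>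
     kar_obj m d p \<and> kar_hom m p s k \<and> m u k = z \<and> m (d k) k = p \<and>
     (\<forall>q g. kar_obj m d q \<and> kar_hom m q s g \<and> m u g = z \<longrightarrow>
        (\<exists>!h. kar_hom m q p h \<and> m k h = g))"

text \<open>Bracket of the endomorphism Foulis semigroup of object s in a dagger kernel
  category: [u] = ker(u) \<circ> ker(u)^dagger, for a (chosen) dagger kernel of u.\<close>
definition kar_end_bracket :: "('a \<Rightarrow> 'a \<Rightarrow> 'a) \<Rightarrow> ('a \<Rightarrow> 'a) \<Rightarrow> 'a \<Rightarrow> 'a \<Rightarrow> 'a \<Rightarrow> 'a" where
  "kar_end_bracket m d z s u =
     (SOME x. \<exists>p k. kar_dkernel m d z s s u p k \<and> x = m k (d k))"

end

theory Submission
  imports Defs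
begin

theorem mainTheorem17:
  fixes m :: "'a \<Rightarrow> 'a \<Rightarrow> 'a" and e :: 'a and d b :: "'a \<Rightarrow> 'a" and s :: 'a
  assumes "foulis UNIV m e d b"
    and "m s s = s" and "d s = s"
  shows "foulis (End_set m s) m s d (\<lambda>t. m s (m (b t) s))
    \<and> End_set m s = {u. kar_hom m s s u}
    \<and> (\<forall>u\<in>End_set m s. kar_end_bracket m d (b e) s u = m s (m (b u) s))
    \<and> End_set m e = UNIV \<and> (\<forall>t. m e (m (b t) e) = b t)"
proof -
  note F = assms(1)[unfolded foulis_def, simplified]
  have A: "\<And>x y z. m (m x y) z = m x (m y z)" using F by blast
  have U1: "\<And>x. m e x = x" and U2: "\<And>x. m x e = x" using F by auto
  have D1: "d e = e" and D2: "\<And>x y. d (m x y) = m (d y) (d x)" and D3: "\<And>x. d (d x) = x"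
    using F by auto
  have B1: "\<And>x. m (b x) (b x) = b x" and B2: "\<And>x. d (b x) = b x" using F by metis+
  have Z1: "\<And>x. m (b e) x = b e" and Z2: "\<And>x. m x (b e) = b e" using F by auto
  have K: "\<And>x y. m x y = b e \<longleftrightarrow> (\<exists>z. y = m (b x) z)" using F by blast
  have ss: "m s s = s" "d s = s" using assms by auto
  have B1': "\<And>x y. m (b x) (m (b x) y) = m (b x) y" by (metis A B1)
  have ss': "\<And>y. m s (m s y) = m s y" by (metis A ss(1))
  have L1: "\<And>x z. m x (m (b x) z) = b e" using K by blast
  have L1': "\<And>x. m x (b x) = b e" using L1 U2 by metis
  have L2: "\<And>t. m t s = t \<Longrightarrow> m s (b t) = m (b t) s"
  proof -
    fix t assume ts: "m t s = t"
    have "m t (m s (b t)) = b e" using ts L1' by (metis A)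
    then obtain z where z: "m s (b t) = m (b t) z" using K by blast
    have c: "m (b t) (m s (b t)) = m s (b t)" using z B1' by simp
    have "d (m s (b t)) = m (b t) s" using D2 B2 ss by simp
    moreover have "d (m (b t) (m s (b t))) = m (b t) (m s (b t))"
      using D2 B2 ss A by (simp add: A)
    ultimately show "m s (b t) = m (b t) s" using c by metis
  qed
  have E: "\<And>t. t \<in> End_set m s \<longleftrightarrow> m s t = t \<and> m t s = t" by (simp add: End_set_def)
  have br: "\<And>t. t \<in> End_set m s \<Longrightarrow> m s (m (b t) s) = m s (b t)"
    using L2 E ss' by (metis A ss(1))
  have zero: "m s (m (b s) s) = b e" using br[of s] E ss L1' by metis
  have part1: "foulis (End_set m s) m s d (\<lambda>t. m s (m (b t) s))"
    unfolding foulis_def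
  proof (intro conjI ballI)
    show "s \<in> End_set m s" using E ss by auto
  next
    fix x y assume "x \<in> End_set m s" "y \<in> End_set m s"
    thus "m x y \<in> End_set m s" using E A by metis
  next
    fix x assume "x \<in> End_set m s"
    thus "d x \<in> End_set m s" using E D2 ss by metis
  next
    fix x assume "x \<in> End_set m s"
    thus "m s (m (b x) s) \<in> End_set m s" using E A ss' by (metis ss(1))
  next
    fix x y z show "m (m x y) z = m x (m y z)" by (rule A)
  next
    fix x assume "x \<in> End_set m s" thus "m s x = x" "m x s = x" using E by auto
  next
    show "d s = s" by (rule ss(2))
  next
    fix x y show "d (m x y) = m (d y) (d x)" by (rule D2)
  next
    fix x show "d (d x) = x" by (rule D3)
  next
    fix x assume x: "x \<in> End_set m s"
    have c: "m s (b x) = m (b x) s" using L2 x E by blast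
    show "m (m s (m (b x) s)) (m s (m (b x) s)) = m s (m (b x) s)"
      using br[OF x] c by (metis A B1' ss')
    show "m s (m (b x) s) = d (m s (m (b x) s))"
      using br[OF x] c D2 B2 ss by metis
  next
    fix x assume x: "x \<in> End_set m s"
    show "m (m s (m (b s) s)) x = m s (m (b s) s)" "m x (m s (m (b s) s)) = m s (m (b s) s)"
      using zero Z1 Z2 by auto
  next
    fix x y assume x: "x \<in> End_set m s" and y: "y \<in> End_set m s"
    have c: "m s (b x) = m (b x) s" using L2 x E by blast
    show "(m x y = m s (m (b s) s)) = (\<exists>z\<in>End_set m s. y = m (m s (m (b x) s)) z)"
    proof
      assume "m x y = m s (m (b s) s)"
      then obtain z where z: "y = m (b x) z" using zero K by metis
      have "y = m s (m y s)" using y E by metis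
      also have "\<dots> = m s (m (b x) (m z s))" using z A by simp
      also have "\<dots> = m (m s (m (b x) s)) (m s (m z s))" using br[OF x] c A ss' by metis
      finally show "\<exists>z\<in>End_set m s. y = m (m s (m (b x) s)) z"
        using E A ss' by (metis ss(1))
    next
      assume "\<exists>z\<in>End_set m s. y = m (m s (m (b x) s)) z"
      then obtain z where z: "y = m (m s (m (b x) s)) z" by blast
      have "m x y = m (m x s) (m (b x) (m s z))" using z by (simp add: A)
      also have "\<dots> = b e" using x E L1 by metis
      finally show "m x y = m s (m (b s) s)" using zero by simp
    qed
  qed
  have part2: "End_set m s = {u. kar_hom m s s u}"
    by (auto simp: End_set_def kar_hom_def)
  have part3: "\<forall>u\<in>End_set m s. kar_end_bracket m d (b e) s u = m s (m (b u) s)"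
  proof
    fix u assume u: "u \<in> End_set m s"
    have c: "m s (b u) = m (b u) s" using L2 u E by blast
    define p where "p = m s (b u)"
    have pp: "m p p = p" using c p_def by (metis A B1' ss')
    have pd: "d p = p" using c p_def D2 B2 ss by metis
    have ps: "m p s = p" "m s p = p" using c p_def by (metis A ss(1))+
    have up: "m u p = b e" using u E c p_def L1' by (metis A)
    have pg: "\<And>g. m s g = g \<Longrightarrow> m u g = b e \<Longrightarrow> m p g = g"
    proof -
      fix g assume "m s g = g" "m u g = b e"
      then obtain z where "g = m (b u) z" using K by blast
      hence "m (b u) g = g" using B1' by simp
      thus "m p g = g" using \<open>m s g = g\<close> p_def A by metis
    qed
    have ker_all: "\<And>q k. kar_dkernel m d (b e) s s u q k \<Longrightarrow> m k (d k) = p"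
    proof -
      fix q k assume kk: "kar_dkernel m d (b e) s s u q k"
      hence k1: "m k q = k" "m s k = k" "m u k = b e" "m (d k) k = q"
        and univ: "\<And>q' g. kar_obj m d q' \<Longrightarrow> kar_hom m q' s g \<Longrightarrow> m u g = b e \<Longrightarrow>
             (\<exists>!h. kar_hom m q' q h \<and> m k h = g)"
        unfolding kar_dkernel_def kar_hom_def by blast+
      have "kar_obj m d p" using pp pd by (simp add: kar_obj_def)
      moreover have "kar_hom m p s p" using pp ps by (simp add: kar_hom_def)
      ultimately obtain h where h: "m q h = h" "m k h = p"
        using univ up unfolding kar_hom_def by blast
      have kp: "m p k = k" using pg k1 by blast
      have dk: "m (d k) p = d k" using kp D2 pd by metis
      have "m k (d k) = m k (m (d k) p)" using dk by simp
      also have "\<dots> = m k (m (d k) (m k h))" using h by simp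
      also have "\<dots> = m (m k (m (d k) k)) h" by (simp add: A)
      also have "\<dots> = p" using k1 h by simp
      finally show "m k (d k) = p" .
    qed
    have ex: "kar_dkernel m d (b e) s s u p p"
      unfolding kar_dkernel_def
    proof (intro conjI allI impI)
      show "kar_obj m d p" using pp pd by (simp add: kar_obj_def)
      show "kar_hom m p s p" using pp ps by (simp add: kar_hom_def)
      show "m u p = b e" by (rule up)
      show "m (d p) p = p" using pd pp by simp
    next
      fix q g assume "kar_obj m d q \<and> kar_hom m q s g \<and> m u g = b e"
      hence g: "m g q = g" "m s g = g" "m u g = b e" by (auto simp: kar_hom_def)
      have pg': "m p g = g" using pg g by blast
      show "\<exists>!h. kar_hom m q p h \<and> m p h = g"
      proof (rule ex1I[of _ g])
        show "kar_hom m q p g \<and> m p g = g" using g pg' by (simp add: kar_hom_def)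
      next
        fix h assume "kar_hom m q p h \<and> m p h = g"
        thus "h = g" by (auto simp: kar_hom_def)
      qed
    qed
    have "\<exists>x. \<exists>q k. kar_dkernel m d (b e) s s u q k \<and> x = m k (d k)" using ex by blast
    hence "\<exists>q k. kar_dkernel m d (b e) s s u q k \<and> kar_end_bracket m d (b e) s u = m k (d k)"
      unfolding kar_end_bracket_def by (rule someI_ex)
    hence "kar_end_bracket m d (b e) s u = p" using ker_all by metis
    thus "kar_end_bracket m d (b e) s u = m s (m (b u) s)" using br[OF u] p_def by simp
  qed
  have part4: "End_set m e = UNIV" by (auto simp: End_set_def U1 U2)
  show ?thesis using part1 part2 part3 part4 U1 U2 by simp
qed

end
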